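(* Let $\Sigma$ be a finite alphabet and let $p:\mathcal{Q}\to\mathcal{F}(B_\Sigma)$ be a functor of categories. Then $p$ is ULF and finitary if and only if $p$ is (up to isomorphism of categories over $\mathcal{F}(B_\Sigma)$) the functor associated to a bare nondeterministic finite-state automaton over $\Sigma$; that is, iff there exist finite sets $Q$ and $T$ and a function $\delta:T\to Q\times\Sigma\times Q$, and an isomorphism between $\mathcal{Q}$ and the free category on the graph with nodes $Q$ and an edge $t:q\to q'$ for each $t\in T$ with $\delta(t)=(q,a,q')$, under which $p$ corresponds to the functor sending each such edge $t$ to the letter $a$.
   Context: $B_\Sigma$ is the bouquet graph with one node $*$ and one loop $a:*\to *$ for each $a\in\Sigma$; its free category $\mathcal{F}(B_\Sigma)$ has one object, whose arrows are the words over $\Sigma$ with composition given by concatenation. The free category on a graph has the nodes as objects and finite paths as arrows. Composition is written diagrammatically. A functor $p:\mathcal{D}\to\mathcal{C}$ is ULF if for every arrow $\alpha$ of $\mathcal{D}$ and arrows $u,v$ of $\mathcal{C}$ with $p(\alpha)=uv$ there is a unique pair of arrows $\beta,\gamma$ of $\mathcal{D}$ with $\alpha=\beta\gamma$, $p(\beta)=u$, $p(\gamma)=v$. It is finitary if the fibers $p^{-1}(A)$ (objects over $A$) and $p^{-1}(w)$ (arrows over $w$) are finite for every object $A$ and arrow $w$ of $\mathcal{C}$. *)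

theory Defs
  imports Main
begin

text \<open>Small categories given by carriers; composition is diagrammatic:
  Comp C f g is "first f, then g", defined when Cod f = Dom g.\<close>

record ('o, 'm) cat =
  Obj  :: "'o set"
  Arr  :: "'m set"
  Dom  :: "'m \<Rightarrow> 'o"
  Cod  :: "'m \<Rightarrow> 'o"
  Id   :: "'o \<Rightarrow> 'm"
  Comp :: "'m \<Rightarrow> 'm \<Rightarrow> 'm"

definition is_category :: "('o, 'm) cat \<Rightarrow> bool" where
  "is_category C \<longleftrightarrow>
     (\<forall>f\<in>Arr C. Dom C f \<in> Obj C \<and> Cod C f \<in> Obj C) \<and>
     (\<forall>x\<in>Obj C. Id C x \<in> Arr C \<and> Dom C (Id C x) = x \<and> Cod C (Id C x) = x) \<and>
     (\<forall>f\<in>Arr C. \<forall>g\<in>Arr C. Cod C f = Dom C g \<longrightarrow>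
        Comp C f g \<in> Arr C \<and> Dom C (Comp C f g) = Dom C f \<and> Cod C (Comp C f g) = Cod C g) \<and>
     (\<forall>f\<in>Arr C. Comp C (Id C (Dom C f)) f = f \<and> Comp C f (Id C (Cod C f)) = f) \<and>
     (\<forall>f\<in>Arr C. \<forall>g\<in>Arr C. \<forall>h\<in>Arr C. Cod C f = Dom C g \<longrightarrow> Cod C g = Dom C h \<longrightarrow>
        Comp C (Comp C f g) h = Comp C f (Comp C g h))"

definition is_functor ::
  "('o, 'm) cat \<Rightarrow> ('p, 'n) cat \<Rightarrow> ('o \<Rightarrow> 'p) \<Rightarrow> ('m \<Rightarrow> 'n) \<Rightarrow> bool" where
  "is_functor C D Fo Fm \<longleftrightarrow>
     (\<forall>x\<in>Obj C. Fo x \<in> Obj D) \<and>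
     (\<forall>f\<in>Arr C. Fm f \<in> Arr D \<and> Dom D (Fm f) = Fo (Dom C f) \<and> Cod D (Fm f) = Fo (Cod C f)) \<and>
     (\<forall>x\<in>Obj C. Fm (Id C x) = Id D (Fo x)) \<and>
     (\<forall>f\<in>Arr C. \<forall>g\<in>Arr C. Cod C f = Dom C g \<longrightarrow> Fm (Comp C f g) = Comp D (Fm f) (Fm g))"

definition is_cat_iso ::
  "('o, 'm) cat \<Rightarrow> ('p, 'n) cat \<Rightarrow> ('o \<Rightarrow> 'p) \<Rightarrow> ('m \<Rightarrow> 'n) \<Rightarrow> bool" where
  "is_cat_iso C D Fo Fm \<longleftrightarrow> is_functor C D Fo Fm \<and>
     (\<exists>Go Gm. is_functor D C Go Gm \<and>
        (\<forall>x\<in>Obj C. Go (Fo x) = x) \<and> (\<forall>y\<in>Obj D. Fo (Go y) = y) \<and>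
        (\<forall>f\<in>Arr C. Gm (Fm f) = f) \<and> (\<forall>g\<in>Arr D. Fm (Gm g) = g))"

definition is_ULF ::
  "('o, 'm) cat \<Rightarrow> ('p, 'n) cat \<Rightarrow> ('o \<Rightarrow> 'p) \<Rightarrow> ('m \<Rightarrow> 'n) \<Rightarrow> bool" where
  "is_ULF D C Po Pm \<longleftrightarrow>
     (\<forall>\<alpha>\<in>Arr D. \<forall>u\<in>Arr C. \<forall>v\<in>Arr C. Cod C u = Dom C v \<longrightarrow> Pm \<alpha> = Comp C u v \<longrightarrow>
        (\<exists>!(\<beta>, \<gamma>). \<beta> \<in> Arr D \<and> \<gamma> \<in> Arr D \<and> Cod D \<beta> = Dom D \<gamma> \<and>
             \<alpha> = Comp D \<beta> \<gamma> \<and> Pm \<beta> = u \<and> Pm \<gamma> = v))"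

definition is_finitary ::
  "('o, 'm) cat \<Rightarrow> ('p, 'n) cat \<Rightarrow> ('o \<Rightarrow> 'p) \<Rightarrow> ('m \<Rightarrow> 'n) \<Rightarrow> bool" where
  "is_finitary D C Po Pm \<longleftrightarrow>
     (\<forall>A\<in>Obj C. finite {X \<in> Obj D. Po X = A}) \<and>
     (\<forall>w\<in>Arr C. finite {\<alpha> \<in> Arr D. Pm \<alpha> = w})"

text \<open>Free category on a graph (nodes N, edges E, source/target maps).
  An arrow is a finite path, represented as (start node, list of edges).\<close>

fun path_ok :: "'e set \<Rightarrow> ('e \<Rightarrow> 'n) \<Rightarrow> ('e \<Rightarrow> 'n) \<Rightarrow> 'n \<Rightarrow> 'e list \<Rightarrow> bool" where
  "path_ok E s t q [] = True"
| "path_ok E s t q (e # es) = (e \<in> E \<and> s e = q \<and> path_ok E s t (t e) es)"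

fun path_end :: "('e \<Rightarrow> 'n) \<Rightarrow> 'n \<Rightarrow> 'e list \<Rightarrow> 'n" where
  "path_end t q [] = q"
| "path_end t q (e # es) = path_end t (t e) es"

definition free_cat ::
  "'n set \<Rightarrow> 'e set \<Rightarrow> ('e \<Rightarrow> 'n) \<Rightarrow> ('e \<Rightarrow> 'n) \<Rightarrow> ('n, 'n \<times> 'e list) cat" where
  "free_cat N E s t =
     \<lparr> Obj = N,
       Arr = {(q, es). q \<in> N \<and> path_ok E s t q es},
       Dom = (\<lambda>(q, es). q),
       Cod = (\<lambda>(q, es). path_end t q es),
       Id = (\<lambda>q. (q, [])),
       Comp = (\<lambda>(q, es) (q', es'). (q, es @ es')) \<rparr>"

text \<open>Free category on the bouquet graph B_Sigma: one node, one loop per letter.\<close>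
definition FB :: "'c set \<Rightarrow> (unit, unit \<times> 'c list) cat" where
  "FB \<Sigma> = free_cat {()} \<Sigma> (\<lambda>_. ()) (\<lambda>_. ())"

definition nfa_src :: "('t \<Rightarrow> 'q \<times> 'c \<times> 'q) \<Rightarrow> 't \<Rightarrow> 'q" where
  "nfa_src \<delta> t = fst (\<delta> t)"
definition nfa_lbl :: "('t \<Rightarrow> 'q \<times> 'c \<times> 'q) \<Rightarrow> 't \<Rightarrow> 'c" where
  "nfa_lbl \<delta> t = fst (snd (\<delta> t))"
definition nfa_tgt :: "('t \<Rightarrow> 'q \<times> 'c \<times> 'q) \<Rightarrow> 't \<Rightarrow> 'q" where
  "nfa_tgt \<delta> t = snd (snd (\<delta> t))"

definition nfa_cat :: "'q set \<Rightarrow> 't set \<Rightarrow> ('t \<Rightarrow> 'q \<times> 'c \<times> 'q) \<Rightarrow> ('q, 'q \<times> 't list) cat" where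
  "nfa_cat Q T \<delta> = free_cat Q T (nfa_src \<delta>) (nfa_tgt \<delta>)"

definition nfa_functor_arr :: "('t \<Rightarrow> 'q \<times> 'c \<times> 'q) \<Rightarrow> 'q \<times> 't list \<Rightarrow> unit \<times> 'c list" where
  "nfa_functor_arr \<delta> = (\<lambda>(q, ts). ((), map (nfa_lbl \<delta>) ts))"

end

theory Submission
  imports Defs
begin


lemma path_ok_append: "path_ok E s t q (xs @ ys) \<longleftrightarrow> path_ok E s t q xs \<and> path_ok E s t (path_end t q xs) ys"
  by (induction xs arbitrary: q) auto
lemma path_end_append: "path_end t q (xs @ ys) = path_end t (path_end t q xs) ys"
  by (induction xs arbitrary: q) auto
lemma path_end_in: "path_ok E s t q xs \<Longrightarrow> q \<in> N \<Longrightarrow> \<forall>e\<in>E. t e \<in> N \<Longrightarrow> path_end t q xs \<in> N"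
  by (induction xs arbitrary: q) auto
lemma path_ok_set: "path_ok E s t q xs \<Longrightarrow> set xs \<subseteq> E"
  by (induction xs arbitrary: q) auto
lemma path_ok_const: "path_ok E (\<lambda>_. c) (\<lambda>_. c) c w \<longleftrightarrow> set w \<subseteq> E"
  by (induction w) auto

lemma free_cat_is_category:
  assumes "\<forall>e\<in>E. s e \<in> N \<and> t e \<in> N"
  shows "is_category (free_cat N E s t)"
  using assms unfolding is_category_def free_cat_def
  by (auto simp: path_ok_append path_end_append intro: path_end_in)

lemma FB_arr: "x \<in> Arr (FB S) \<longleftrightarrow> set (snd x) \<subseteq> S"
  by (cases x) (auto simp: FB_def free_cat_def path_ok_const)
lemma FB_simps: "Obj (FB S) = {()}" "Dom (FB S) x = ()" "Cod (FB S) x = ()" "Id (FB S) q = ((), [])"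
  "Comp (FB S) x y = ((), snd x @ snd y)"
  by (auto simp: FB_def free_cat_def split: prod.splits)

lemma inverse_iso:
  assumes cD: "is_category D" and F: "is_functor D C Go Gm"
    and bo: "bij_betw Go (Obj D) (Obj C)" and ba: "bij_betw Gm (Arr D) (Arr C)"
  shows "is_cat_iso C D (inv_into (Obj D) Go) (inv_into (Arr D) Gm)"
proof -
  let ?Fo = "inv_into (Obj D) Go" and ?Fm = "inv_into (Arr D) Gm"
  have io: "inj_on Go (Obj D)" and ia: "inj_on Gm (Arr D)"
    using bo ba by (auto simp: bij_betw_def)
  have Fo1: "\<And>x. x \<in> Obj C \<Longrightarrow> ?Fo x \<in> Obj D \<and> Go (?Fo x) = x"
    using bo by (metis bij_betw_imp_surj_on inv_into_into f_inv_into_f)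
  have Fo2: "\<And>y. y \<in> Obj D \<Longrightarrow> ?Fo (Go y) = y" using io by simp
  have Fm1: "\<And>x. x \<in> Arr C \<Longrightarrow> ?Fm x \<in> Arr D \<and> Gm (?Fm x) = x"
    using ba by (metis bij_betw_imp_surj_on inv_into_into f_inv_into_f)
  have Fm2: "\<And>y. y \<in> Arr D \<Longrightarrow> ?Fm (Gm y) = y" using ia by simp
  have FD: "\<forall>x\<in>Obj D. Go x \<in> Obj C"
    "\<forall>f\<in>Arr D. Gm f \<in> Arr C \<and> Dom C (Gm f) = Go (Dom D f) \<and> Cod C (Gm f) = Go (Cod D f)"
    "\<forall>x\<in>Obj D. Gm (Id D x) = Id C (Go x)"
    "\<forall>f\<in>Arr D. \<forall>g\<in>Arr D. Cod D f = Dom D g \<longrightarrow> Gm (Comp D f g) = Comp C (Gm f) (Gm g)"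
    using F unfolding is_functor_def by auto
  have CD: "\<forall>f\<in>Arr D. Dom D f \<in> Obj D \<and> Cod D f \<in> Obj D"
     "\<forall>x\<in>Obj D. Id D x \<in> Arr D"
     "\<forall>f\<in>Arr D. \<forall>g\<in>Arr D. Cod D f = Dom D g \<longrightarrow> Comp D f g \<in> Arr D"
    using cD unfolding is_category_def by auto
  have "is_functor C D ?Fo ?Fm"
    unfolding is_functor_def
  proof (intro conjI ballI impI)
    fix x assume "x \<in> Obj C" then show "?Fo x \<in> Obj D" using Fo1 by blast
  next
    fix f assume f: "f \<in> Arr C"
    then have a: "?Fm f \<in> Arr D" "Gm (?Fm f) = f" using Fm1 by auto
    show "?Fm f \<in> Arr D" by fact
    show "Dom D (?Fm f) = ?Fo (Dom C f)" using a FD CD Fo2 by metis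
    show "Cod D (?Fm f) = ?Fo (Cod C f)" using a FD CD Fo2 by metis
  next
    fix x assume x: "x \<in> Obj C"
    then have "?Fo x \<in> Obj D" "Go (?Fo x) = x" using Fo1 by auto
    then show "?Fm (Id C x) = Id D (?Fo x)" using FD CD Fm2 by metis
  next
    fix f g assume f: "f \<in> Arr C" and g: "g \<in> Arr C" and fg: "Cod C f = Dom C g"
    have a: "?Fm f \<in> Arr D" "Gm (?Fm f) = f" "?Fm g \<in> Arr D" "Gm (?Fm g) = g" using Fm1 f g by auto
    have "Cod D (?Fm f) = Dom D (?Fm g)" using a FD CD Fo2 fg by metis
    then show "?Fm (Comp C f g) = Comp D (?Fm f) (?Fm g)" using a FD CD Fm2 by metis
  qed
  then show ?thesis unfolding is_cat_iso_def
    using F Fo1 Fo2 Fm1 Fm2 by blast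
qed



fun comp_list :: "('o, 'm) cat \<Rightarrow> 'o \<Rightarrow> 'm list \<Rightarrow> 'm" where
  "comp_list C x [] = Id C x"
| "comp_list C x (e # es) = Comp C e (comp_list C (Cod C e) es)"

locale ulfc =
  fixes S :: "'c set" and C :: "('o, 'm) cat" and Po :: "'o \<Rightarrow> unit" and Pm :: "'m \<Rightarrow> unit \<times> 'c list"
  assumes fS: "finite S" and cC: "is_category C" and fF: "is_functor C (FB S) Po Pm"
    and uU: "is_ULF C (FB S) Po Pm" and fnF: "is_finitary C (FB S) Po Pm"
begin

definition wd where "wd a = snd (Pm a)"
definition E where "E = {a \<in> Arr C. length (wd a) = 1}"

lemma Pm_eq: "Pm a = ((), wd a)" by (simp add: wd_def prod_eq_iff)

lemma Pm_iff: "Pm b = ((), u) \<longleftrightarrow> wd b = u" by (simp add: Pm_eq)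

lemma cat:
  "f \<in> Arr C \<Longrightarrow> Dom C f \<in> Obj C" "f \<in> Arr C \<Longrightarrow> Cod C f \<in> Obj C"
  "x \<in> Obj C \<Longrightarrow> Id C x \<in> Arr C" "x \<in> Obj C \<Longrightarrow> Dom C (Id C x) = x" "x \<in> Obj C \<Longrightarrow> Cod C (Id C x) = x"
  "f \<in> Arr C \<Longrightarrow> g \<in> Arr C \<Longrightarrow> Cod C f = Dom C g \<Longrightarrow> Comp C f g \<in> Arr C"
  "f \<in> Arr C \<Longrightarrow> g \<in> Arr C \<Longrightarrow> Cod C f = Dom C g \<Longrightarrow> Dom C (Comp C f g) = Dom C f"
  "f \<in> Arr C \<Longrightarrow> g \<in> Arr C \<Longrightarrow> Cod C f = Dom C g \<Longrightarrow> Cod C (Comp C f g) = Cod C g"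
  "f \<in> Arr C \<Longrightarrow> Comp C (Id C (Dom C f)) f = f"
  "f \<in> Arr C \<Longrightarrow> Comp C f (Id C (Cod C f)) = f"
  "f \<in> Arr C \<Longrightarrow> g \<in> Arr C \<Longrightarrow> h \<in> Arr C \<Longrightarrow> Cod C f = Dom C g \<Longrightarrow> Cod C g = Dom C h \<Longrightarrow>
     Comp C (Comp C f g) h = Comp C f (Comp C g h)"
  using cC unfolding is_category_def by auto

lemma wd_set: "a \<in> Arr C \<Longrightarrow> set (wd a) \<subseteq> S"
  using fF unfolding is_functor_def by (auto simp: FB_arr wd_def)
lemma wd_comp: "f \<in> Arr C \<Longrightarrow> g \<in> Arr C \<Longrightarrow> Cod C f = Dom C g \<Longrightarrow> wd (Comp C f g) = wd f @ wd g"
  using fF unfolding is_functor_def by (auto simp: FB_simps wd_def)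
lemma wd_id: "x \<in> Obj C \<Longrightarrow> wd (Id C x) = []"
  using fF unfolding is_functor_def by (auto simp: FB_simps wd_def)

lemma split:
  assumes a: "a \<in> Arr C" and w: "wd a = u @ v"
  shows "\<exists>!(b, c). b \<in> Arr C \<and> c \<in> Arr C \<and> Cod C b = Dom C c \<and> a = Comp C b c \<and> wd b = u \<and> wd c = v"
proof -
  have "set u \<subseteq> S" "set v \<subseteq> S" using wd_set[OF a] w by auto
  then have "((), u) \<in> Arr (FB S)" "((), v) \<in> Arr (FB S)" by (auto simp: FB_arr)
  moreover have "Pm a = Comp (FB S) ((), u) ((), v)" using w by (simp add: Pm_eq FB_simps)
  ultimately have U: "\<exists>!(b, c). b \<in> Arr C \<and> c \<in> Arr C \<and> Cod C b = Dom C c \<and> a = Comp C b c \<and> Pm b = ((), u) \<and> Pm c = ((), v)"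
    using uU a unfolding is_ULF_def FB_simps by blast
  show ?thesis using U by (simp only: Pm_iff)
qed

lemma ex1_uniq2: "Ex1 P \<Longrightarrow> P x \<Longrightarrow> P y \<Longrightarrow> x = y" by blast

lemma split_uniq:
  assumes "a \<in> Arr C"
    "b \<in> Arr C" "c \<in> Arr C" "Cod C b = Dom C c" "a = Comp C b c"
    "b' \<in> Arr C" "c' \<in> Arr C" "Cod C b' = Dom C c'" "a = Comp C b' c'"
    "wd b = wd b'" "wd c = wd c'"
  shows "b = b' \<and> c = c'"
proof -
  have w: "wd a = wd b @ wd c" using wd_comp[OF assms(2-4)] assms(5) by simp
  have "(b, c) = (b', c')"
    apply (rule ex1_uniq2[OF split[OF assms(1) w]])
    using assms(2-11) by auto
  then show ?thesis by simp
qed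

lemma empty_id: assumes a: "a \<in> Arr C" "wd a = []" shows "a = Id C (Dom C a)"
  using split_uniq[OF a(1), of "Id C (Dom C a)" a a "Id C (Cod C a)"] a cat wd_id by simp

end


context ulfc begin

lemma E_sub: "e \<in> E \<Longrightarrow> e \<in> Arr C" by (simp add: E_def)
lemma E_wd: "e \<in> E \<Longrightarrow> wd e = [hd (wd e)]"
  by (cases "wd e") (auto simp: E_def)

lemma cl_props: "x \<in> Obj C \<Longrightarrow> path_ok E (Dom C) (Cod C) x es \<Longrightarrow>
   comp_list C x es \<in> Arr C \<and> Dom C (comp_list C x es) = x \<and> Cod C (comp_list C x es) = path_end (Cod C) x es"
proof (induction es arbitrary: x)
  case Nil then show ?case by (simp add: cat)
next
  case (Cons e es)
  then have e: "e \<in> Arr C" "Dom C e = x" and p: "path_ok E (Dom C) (Cod C) (Cod C e) es"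
    by (auto simp: E_def)
  have "Cod C e \<in> Obj C" using e cat by blast
  from Cons.IH[OF this p] e show ?case by (simp add: cat)
qed

lemma cl_wd: "x \<in> Obj C \<Longrightarrow> path_ok E (Dom C) (Cod C) x es \<Longrightarrow>
   wd (comp_list C x es) = concat (map wd es)"
proof (induction es arbitrary: x)
  case Nil then show ?case by (simp add: wd_id)
next
  case (Cons e es)
  then have e: "e \<in> Arr C" "Dom C e = x" and p: "path_ok E (Dom C) (Cod C) (Cod C e) es"
    by (auto simp: E_def)
  have o: "Cod C e \<in> Obj C" using e cat by blast
  from Cons.IH[OF o p] cl_props[OF o p] e show ?case by (simp add: wd_comp)
qed

lemma cl_len: "x \<in> Obj C \<Longrightarrow> path_ok E (Dom C) (Cod C) x es \<Longrightarrow>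
   length (wd (comp_list C x es)) = length es"
proof -
  assume a: "x \<in> Obj C" "path_ok E (Dom C) (Cod C) x es"
  have "set es \<subseteq> E" using a(2) by (rule path_ok_set)
  then have "length (concat (map wd es)) = length es"
    by (induction es) (auto simp: E_def)
  then show ?thesis using cl_wd[OF a] by simp
qed

lemma cl_append: "x \<in> Obj C \<Longrightarrow> path_ok E (Dom C) (Cod C) x (es @ es') \<Longrightarrow>
   comp_list C x (es @ es') = Comp C (comp_list C x es) (comp_list C (path_end (Cod C) x es) es')"
proof (induction es arbitrary: x)
  case Nil
  then have "comp_list C x es' \<in> Arr C" "Dom C (comp_list C x es') = x" using cl_props by auto
  then show ?case using cat(9) by fastforce
next
  case (Cons e es)
  then have e: "e \<in> Arr C" "Dom C e = x" and p: "path_ok E (Dom C) (Cod C) (Cod C e) (es @ es')"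
    by (auto simp: E_def)
  have o: "Cod C e \<in> Obj C" using e cat by blast
  have p1: "path_ok E (Dom C) (Cod C) (Cod C e) es"
    and p2: "path_ok E (Dom C) (Cod C) (path_end (Cod C) (Cod C e) es) es'"
    using p by (auto simp: path_ok_append)
  have o2: "path_end (Cod C) (Cod C e) es \<in> Obj C" using cl_props[OF o p1] cat by metis
  note A = cl_props[OF o p1] and B = cl_props[OF o2 p2]
  have "comp_list C x ((e # es) @ es') = Comp C e (Comp C (comp_list C (Cod C e) es) (comp_list C (path_end (Cod C) (Cod C e) es) es'))"
    using Cons.IH[OF o p] by simp
  also have "\<dots> = Comp C (Comp C e (comp_list C (Cod C e) es)) (comp_list C (path_end (Cod C) (Cod C e) es) es')"
    using cat(11)[of e "comp_list C (Cod C e) es" "comp_list C (path_end (Cod C) (Cod C e) es) es'"] A B e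
    by simp
  finally show ?case by simp
qed

lemma cl_surj: "a \<in> Arr C \<Longrightarrow> \<exists>es. path_ok E (Dom C) (Cod C) (Dom C a) es \<and> comp_list C (Dom C a) es = a"
proof (induction "length (wd a)" arbitrary: a)
  case 0
  then have "a = Id C (Dom C a)" using empty_id by simp
  then show ?case by (intro exI[of _ "[]"]) simp
next
  case (Suc n)
  then obtain h w where hw: "wd a = [h] @ w" by (cases "wd a") auto
  from split[OF Suc.prems hw] obtain b c where bc: "b \<in> Arr C" "c \<in> Arr C" "Cod C b = Dom C c"
    "a = Comp C b c" "wd b = [h]" "wd c = w" by auto
  have "n = length (wd c)" using Suc.hyps(2) hw bc by simp
  from Suc.hyps(1)[OF this bc(2)] obtain es where es: "path_ok E (Dom C) (Cod C) (Dom C c) es"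
    "comp_list C (Dom C c) es = c" by blast
  have bE: "b \<in> E" using bc by (simp add: E_def)
  have "Dom C a = Dom C b" using bc cat by simp
  then show ?case using bc es bE by (intro exI[of _ "b # es"]) simp
qed

lemma cl_inj: "x \<in> Obj C \<Longrightarrow> path_ok E (Dom C) (Cod C) x es \<Longrightarrow>
  x' \<in> Obj C \<Longrightarrow> path_ok E (Dom C) (Cod C) x' es' \<Longrightarrow> comp_list C x es = comp_list C x' es' \<Longrightarrow> x = x' \<and> es = es'"
proof (induction es arbitrary: x x' es')
  case Nil
  have "length es' = length (wd (comp_list C x' es'))" using cl_len[OF Nil(3,4)] by simp
  also have "\<dots> = length (wd (comp_list C x []))" using Nil(5) by (simp only:)
  also have "\<dots> = 0" using cl_len[OF Nil(1,2)] by (simp only: list.size)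
  finally have "es' = []" by (simp only: length_0_conv)
  moreover have "x = x'" using cl_props[OF Nil(1,2)] cl_props[OF Nil(3,4)] Nil(5) by metis
  ultimately show ?case by simp
next
  case (Cons e es)
  have "length es' = length (wd (comp_list C x' es'))" using cl_len[OF Cons(4,5)] by simp
  also have "\<dots> = length (wd (comp_list C x (e # es)))" using Cons(6) by (simp only:)
  also have "\<dots> = Suc (length es)" using cl_len[OF Cons(2,3)] by (simp only: list.size)
  finally have "length es' = Suc (length es)" .
  then obtain e' es'' where es': "es' = e' # es''" by (cases es') auto
  from Cons.prems(2) have e: "e \<in> E" "Dom C e = x" and p: "path_ok E (Dom C) (Cod C) (Cod C e) es"
    by auto
  from Cons.prems(4) es' have e': "e' \<in> E" "Dom C e' = x'" and p': "path_ok E (Dom C) (Cod C) (Cod C e') es''"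
    by auto
  have o: "Cod C e \<in> Obj C" "Cod C e' \<in> Obj C" using e e' cat E_sub by auto
  note A = cl_props[OF o(1) p] and A' = cl_props[OF o(2) p']
  have eq: "Comp C e (comp_list C (Cod C e) es) = Comp C e' (comp_list C (Cod C e') es'')"
    using Cons.prems(5) es' by simp
  have w1: "wd (Comp C e (comp_list C (Cod C e) es)) = wd e @ wd (comp_list C (Cod C e) es)"
    using wd_comp[of e "comp_list C (Cod C e) es"] A E_sub[OF e(1)] by simp
  have w2: "wd (Comp C e' (comp_list C (Cod C e') es'')) = wd e' @ wd (comp_list C (Cod C e') es'')"
    using wd_comp[of e' "comp_list C (Cod C e') es''"] A' E_sub[OF e'(1)] by simp
  have "wd e = wd e' \<and> wd (comp_list C (Cod C e) es) = wd (comp_list C (Cod C e') es'')"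
  proof -
    have "wd e @ wd (comp_list C (Cod C e) es) = wd e' @ wd (comp_list C (Cod C e') es'')"
      using w1 w2 eq by simp
    moreover have "length (wd e) = length (wd e')" using E_wd[OF e(1)] E_wd[OF e'(1)]
      by (metis length_Cons list.size(3))
    ultimately show ?thesis by simp
  qed
  moreover have "Comp C e (comp_list C (Cod C e) es) \<in> Arr C"
    using A E_sub[OF e(1)] cat(6) by simp
  ultimately have "e = e' \<and> comp_list C (Cod C e) es = comp_list C (Cod C e') es''"
    apply -
    apply (rule split_uniq[of "Comp C e (comp_list C (Cod C e) es)" e "comp_list C (Cod C e) es" e' "comp_list C (Cod C e') es''"])
    using A A' E_sub[OF e(1)] E_sub[OF e'(1)] eq by simp_all
  then show ?case using Cons.IH[OF o(1) p o(2) p'] e e' es' by auto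
qed

lemma fin_obj: "finite (Obj C)"
proof -
  have "finite {X \<in> Obj C. Po X = ()}" using fnF unfolding is_finitary_def FB_simps by blast
  then show ?thesis by simp
qed

lemma fin_E: "finite E"
proof -
  have "E \<subseteq> (\<Union>a\<in>S. {\<alpha> \<in> Arr C. Pm \<alpha> = ((), [a])})"
  proof
    fix e assume e: "e \<in> E"
    then have "wd e = [hd (wd e)]" "hd (wd e) \<in> S" using E_wd wd_set E_sub by (metis, metis insert_subset list.set(2))
    then show "e \<in> (\<Union>a\<in>S. {\<alpha> \<in> Arr C. Pm \<alpha> = ((), [a])})" using e E_sub Pm_iff by blast
  qed
  moreover have "finite (\<Union>a\<in>S. {\<alpha> \<in> Arr C. Pm \<alpha> = ((), [a])})"
  proof (rule finite_UN_I[OF fS])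
    fix a assume "a \<in> S"
    then have "((), [a]) \<in> Arr (FB S)" by (simp add: FB_arr)
    then show "finite {\<alpha> \<in> Arr C. Pm \<alpha> = ((), [a])}" using fnF unfolding is_finitary_def by blast
  qed
  ultimately show ?thesis by (rule finite_subset)
qed

end


context ulfc begin

lemma exists_nfa:
  "\<exists>(Q :: nat set) (T :: nat set) (\<delta> :: nat \<Rightarrow> nat \<times> 'c \<times> nat).
       finite Q \<and> finite T \<and> (\<forall>t\<in>T. \<delta> t \<in> Q \<times> S \<times> Q) \<and>
       (\<exists>Fo Fm. is_cat_iso C (nfa_cat Q T \<delta>) Fo Fm \<and>
          (\<forall>x\<in>Obj C. Po x = ()) \<and>
          (\<forall>f\<in>Arr C. Pm f = nfa_functor_arr \<delta> (Fm f)))"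
proof -
  obtain go where go: "bij_betw go {0..<card (Obj C)} (Obj C)"
    using ex_bij_betw_nat_finite[OF fin_obj] by blast
  obtain dE where dE: "bij_betw dE {0..<card E} E"
    using ex_bij_betw_nat_finite[OF fin_E] by blast
  define Q where "Q = {0..<card (Obj C)}"
  define T where "T = {0..<card E}"
  define eo where "eo = inv_into Q go"
  define \<delta> where "\<delta> t = (eo (Dom C (dE t)), hd (wd (dE t)), eo (Cod C (dE t)))" for t
  define Gm where "Gm = (\<lambda>(q, ts). comp_list C (go q) (map dE ts))"
  have go1: "\<And>q. q \<in> Q \<Longrightarrow> go q \<in> Obj C \<and> eo (go q) = q"
    using go unfolding Q_def eo_def bij_betw_def by auto
  have go2: "\<And>x. x \<in> Obj C \<Longrightarrow> eo x \<in> Q \<and> go (eo x) = x"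
    using go unfolding Q_def eo_def by (metis bij_betw_def inv_into_into f_inv_into_f)
  have dE1: "\<And>t. t \<in> T \<Longrightarrow> dE t \<in> E" using dE unfolding T_def bij_betw_def by auto
  have src: "nfa_src \<delta> t = eo (Dom C (dE t))" for t by (simp add: nfa_src_def \<delta>_def)
  have tgt: "nfa_tgt \<delta> t = eo (Cod C (dE t))" for t by (simp add: nfa_tgt_def \<delta>_def)
  have lbl: "nfa_lbl \<delta> t = hd (wd (dE t))" for t by (simp add: nfa_lbl_def \<delta>_def)
  have dEo: "\<And>t. t \<in> T \<Longrightarrow> Dom C (dE t) \<in> Obj C \<and> Cod C (dE t) \<in> Obj C"
    using dE1 E_sub cat by blast
  have \<delta>T: "\<forall>t\<in>T. \<delta> t \<in> Q \<times> S \<times> Q"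
  proof
    fix t assume t: "t \<in> T"
    have "hd (wd (dE t)) \<in> S" using E_wd[OF dE1[OF t]] wd_set[OF E_sub[OF dE1[OF t]]]
      by (metis insert_subset list.set(2))
    then show "\<delta> t \<in> Q \<times> S \<times> Q" using go2 dEo[OF t] by (simp add: \<delta>_def)
  qed
  have R: "q \<in> Q \<Longrightarrow>
      (path_ok T (nfa_src \<delta>) (nfa_tgt \<delta>) q ts \<longleftrightarrow> set ts \<subseteq> T \<and> path_ok E (Dom C) (Cod C) (go q) (map dE ts))
      \<and> (path_ok T (nfa_src \<delta>) (nfa_tgt \<delta>) q ts \<longrightarrow> path_end (nfa_tgt \<delta>) q ts = eo (path_end (Cod C) (go q) (map dE ts)))" for q ts
  proof (induction ts arbitrary: q)
    case Nil then show ?case using go1 by simp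
  next
    case (Cons t ts)
    show ?case
    proof (cases "t \<in> T")
      case False then show ?thesis by simp
    next
      case True
      have q': "eo (Cod C (dE t)) \<in> Q" and g': "go (eo (Cod C (dE t))) = Cod C (dE t)"
        using go2 dEo[OF True] by auto
      have "eo (Dom C (dE t)) = q \<longleftrightarrow> Dom C (dE t) = go q"
        using go1[OF Cons.prems] go2 dEo[OF True] by metis
      then show ?thesis using Cons.IH[OF q'] g' True dE1[OF True] by (simp add: src tgt) blast
    qed
  qed
  have R1: "\<And>q. q \<in> Q \<Longrightarrow> path_ok T (nfa_src \<delta>) (nfa_tgt \<delta>) q ts \<Longrightarrow> path_ok E (Dom C) (Cod C) (go q) (map dE ts)"
    for ts using R by blast
  have R2: "\<And>q. q \<in> Q \<Longrightarrow> path_ok T (nfa_src \<delta>) (nfa_tgt \<delta>) q ts \<Longrightarrow> path_end (nfa_tgt \<delta>) q ts = eo (path_end (Cod C) (go q) (map dE ts))"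
    for ts using R by blast
  have cD: "is_category (nfa_cat Q T \<delta>)"
    unfolding nfa_cat_def using \<delta>T by (intro free_cat_is_category) (auto simp: nfa_src_def nfa_tgt_def)
  have arrD: "p \<in> Arr (nfa_cat Q T \<delta>) \<longleftrightarrow> fst p \<in> Q \<and> path_ok T (nfa_src \<delta>) (nfa_tgt \<delta>) (fst p) (snd p)" for p
    by (cases p) (simp add: nfa_cat_def free_cat_def)
  have nD: "Obj (nfa_cat Q T \<delta>) = Q" "Dom (nfa_cat Q T \<delta>) = (\<lambda>(q, es). q)"
    "Cod (nfa_cat Q T \<delta>) = (\<lambda>(q, es). path_end (nfa_tgt \<delta>) q es)" "Id (nfa_cat Q T \<delta>) = (\<lambda>q. (q, []))"
    "Comp (nfa_cat Q T \<delta>) = (\<lambda>(q, es) (q', es'). (q, es @ es'))"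
    by (simp_all add: nfa_cat_def free_cat_def)
  have Gm_arr: "\<And>q ts. q \<in> Q \<Longrightarrow> path_ok T (nfa_src \<delta>) (nfa_tgt \<delta>) q ts \<Longrightarrow>
      Gm (q, ts) \<in> Arr C \<and> Dom C (Gm (q, ts)) = go q \<and> Cod C (Gm (q, ts)) = go (path_end (nfa_tgt \<delta>) q ts)"
  proof -
    fix q ts assume q: "q \<in> Q" and p: "path_ok T (nfa_src \<delta>) (nfa_tgt \<delta>) q ts"
    have o: "go q \<in> Obj C" using go1 q by blast
    note A = cl_props[OF o R1[OF q p]]
    have "path_end (Cod C) (go q) (map dE ts) \<in> Obj C" using A cat by metis
    then have "go (path_end (nfa_tgt \<delta>) q ts) = path_end (Cod C) (go q) (map dE ts)"
      using R2[OF q p] go2 by simp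
    then show "Gm (q, ts) \<in> Arr C \<and> Dom C (Gm (q, ts)) = go q \<and> Cod C (Gm (q, ts)) = go (path_end (nfa_tgt \<delta>) q ts)"
      using A by (simp add: Gm_def)
  qed
  have F: "is_functor (nfa_cat Q T \<delta>) C go Gm"
    unfolding is_functor_def
  proof (intro conjI ballI impI)
    fix x assume "x \<in> Obj (nfa_cat Q T \<delta>)" then show "go x \<in> Obj C" using go1 nD by auto
  next
    fix f assume "f \<in> Arr (nfa_cat Q T \<delta>)"
    then obtain q ts where f: "f = (q, ts)" "q \<in> Q" "path_ok T (nfa_src \<delta>) (nfa_tgt \<delta>) q ts"
      using arrD by (cases f) auto
    show "Gm f \<in> Arr C" "Dom C (Gm f) = go (Dom (nfa_cat Q T \<delta>) f)" "Cod C (Gm f) = go (Cod (nfa_cat Q T \<delta>) f)"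
      using Gm_arr[OF f(2,3)] f(1) nD by auto
  next
    fix x assume "x \<in> Obj (nfa_cat Q T \<delta>)"
    then show "Gm (Id (nfa_cat Q T \<delta>) x) = Id C (go x)" by (simp add: nD Gm_def)
  next
    fix f g assume "f \<in> Arr (nfa_cat Q T \<delta>)" "g \<in> Arr (nfa_cat Q T \<delta>)"
      and fg: "Cod (nfa_cat Q T \<delta>) f = Dom (nfa_cat Q T \<delta>) g"
    then obtain q ts q' ts' where f: "f = (q, ts)" "q \<in> Q" "path_ok T (nfa_src \<delta>) (nfa_tgt \<delta>) q ts"
      and g: "g = (q', ts')" "q' \<in> Q" "path_ok T (nfa_src \<delta>) (nfa_tgt \<delta>) q' ts'"
      using arrD by (cases f, cases g) auto
    have q': "q' = path_end (nfa_tgt \<delta>) q ts" using fg f g nD by simp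
    have p: "path_ok T (nfa_src \<delta>) (nfa_tgt \<delta>) q (ts @ ts')" using f g q' by (simp add: path_ok_append)
    have o: "go q \<in> Obj C" using go1 f by blast
    have pe: "path_end (Cod C) (go q) (map dE ts) = go q'"
      using Gm_arr[OF f(2,3)] cl_props[OF o R1[OF f(2,3)]] q' by (simp add: Gm_def)
    have "Gm (Comp (nfa_cat Q T \<delta>) f g) = comp_list C (go q) (map dE ts @ map dE ts')"
      using f g by (simp add: nD Gm_def)
    also have "\<dots> = Comp C (Gm f) (Gm g)"
      using cl_append[OF o, of "map dE ts" "map dE ts'"] R1[OF f(2) p] pe f g by (simp add: Gm_def)
    finally show "Gm (Comp (nfa_cat Q T \<delta>) f g) = Comp C (Gm f) (Gm g)" .
  qed
  have bo: "bij_betw go (Obj (nfa_cat Q T \<delta>)) (Obj C)" unfolding nD(1) using go by (simp only: Q_def)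
  have ba: "bij_betw Gm (Arr (nfa_cat Q T \<delta>)) (Arr C)"
    unfolding bij_betw_def
  proof
    show "inj_on Gm (Arr (nfa_cat Q T \<delta>))"
    proof (rule inj_onI)
      fix f g assume "f \<in> Arr (nfa_cat Q T \<delta>)" "g \<in> Arr (nfa_cat Q T \<delta>)" and eq: "Gm f = Gm g"
      then obtain q ts q' ts' where f: "f = (q, ts)" "q \<in> Q" "path_ok T (nfa_src \<delta>) (nfa_tgt \<delta>) q ts"
        and g: "g = (q', ts')" "q' \<in> Q" "path_ok T (nfa_src \<delta>) (nfa_tgt \<delta>) q' ts'"
        using arrD by (cases f, cases g) auto
      have "go q = go q' \<and> map dE ts = map dE ts'"
        using cl_inj[OF _ R1[OF f(2,3)] _ R1[OF g(2,3)]] go1 f g eq by (simp add: Gm_def)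
      moreover have "inj_on go Q" "inj_on dE T" using go dE by (auto simp: Q_def T_def bij_betw_def)
      moreover have "set ts \<subseteq> T" "set ts' \<subseteq> T" using f g path_ok_set by metis+
      ultimately show "f = g" using f g
        by (metis inj_on_def inj_on_map_eq_map inj_on_subset Un_subset_iff)
    qed
  next
    show "Gm ` Arr (nfa_cat Q T \<delta>) = Arr C"
    proof
      show "Gm ` Arr (nfa_cat Q T \<delta>) \<subseteq> Arr C" using Gm_arr arrD by auto
    next
      show "Arr C \<subseteq> Gm ` Arr (nfa_cat Q T \<delta>)"
      proof
        fix a assume a: "a \<in> Arr C"
        obtain es where es: "path_ok E (Dom C) (Cod C) (Dom C a) es" "comp_list C (Dom C a) es = a"
          using cl_surj[OF a] by blast
        define eE where "eE = inv_into T dE"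
        have sE: "set es \<subseteq> E" using es(1) path_ok_set by metis
        have me: "map dE (map eE es) = es"
          using sE dE unfolding eE_def T_def
          by (induction es) (auto simp: bij_betw_def f_inv_into_f)
        have eT: "\<forall>x\<in>E. eE x \<in> T" using dE unfolding eE_def T_def bij_betw_def by (metis inv_into_into)
        have sT: "set (map eE es) \<subseteq> T" using sE eT by auto
        have q: "eo (Dom C a) \<in> Q" "go (eo (Dom C a)) = Dom C a" using go2 a cat by auto
        have p: "path_ok T (nfa_src \<delta>) (nfa_tgt \<delta>) (eo (Dom C a)) (map eE es)"
          using R[OF q(1), of "map eE es"] sT me q(2) es(1) by simp
        have "Gm (eo (Dom C a), map eE es) = a" using me q(2) es(2) by (simp add: Gm_def)
        moreover have "(eo (Dom C a), map eE es) \<in> Arr (nfa_cat Q T \<delta>)" using arrD q p by simp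
        ultimately show "a \<in> Gm ` Arr (nfa_cat Q T \<delta>)" by (metis image_eqI)
      qed
    qed
  qed
  have iso: "is_cat_iso C (nfa_cat Q T \<delta>) (inv_into Q go) (inv_into (Arr (nfa_cat Q T \<delta>)) Gm)"
    using inverse_iso[OF cD F bo ba] by (simp add: nD)
  have wl: "set ts \<subseteq> T \<Longrightarrow> concat (map wd (map dE ts)) = map (nfa_lbl \<delta>) ts" for ts
  proof (induction ts)
    case Nil then show ?case by simp
  next
    case (Cons t ts)
    then show ?case using E_wd[OF dE1[of t]] by (simp add: lbl)
  qed
  have Pmc: "\<forall>f\<in>Arr C. Pm f = nfa_functor_arr \<delta> (inv_into (Arr (nfa_cat Q T \<delta>)) Gm f)"
  proof
    fix f assume f: "f \<in> Arr C"
    define p where "p = inv_into (Arr (nfa_cat Q T \<delta>)) Gm f"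
    have p1: "p \<in> Arr (nfa_cat Q T \<delta>)" "Gm p = f" using ba f unfolding p_def
      by (metis bij_betw_imp_surj_on inv_into_into f_inv_into_f)+
    obtain q ts where pq: "p = (q, ts)" by (cases p)
    have q: "q \<in> Q" "path_ok T (nfa_src \<delta>) (nfa_tgt \<delta>) q ts" using p1 pq arrD by auto
    have "wd f = concat (map wd (map dE ts))"
      using cl_wd[OF _ R1[OF q]] go1[OF q(1)] p1(2) pq by (simp add: Gm_def)
    also have "\<dots> = map (nfa_lbl \<delta>) ts" using wl path_ok_set[OF q(2)] by blast
    finally show "Pm f = nfa_functor_arr \<delta> (inv_into (Arr (nfa_cat Q T \<delta>)) Gm f)"
      using pq by (simp add: p_def[symmetric] Pm_eq nfa_functor_arr_def)
  qed
  have "finite Q" "finite T" by (simp_all add: Q_def T_def)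
  moreover have "\<forall>x\<in>Obj C. Po x = ()" by simp
  ultimately show ?thesis using \<delta>T iso Pmc
    by (intro exI[of _ Q] exI[of _ T] exI[of _ \<delta>] conjI exI[of _ "inv_into Q go"]
          exI[of _ "inv_into (Arr (nfa_cat Q T \<delta>)) Gm"])
qed

end


lemma nfa_arr: "p \<in> Arr (nfa_cat Q T \<delta>) \<longleftrightarrow> fst p \<in> Q \<and> path_ok T (nfa_src \<delta>) (nfa_tgt \<delta>) (fst p) (snd p)"
  by (cases p) (simp add: nfa_cat_def free_cat_def)
lemma nfa_simps: "Obj (nfa_cat Q T \<delta>) = Q" "Dom (nfa_cat Q T \<delta>) (q, es) = q"
    "Cod (nfa_cat Q T \<delta>) (q, es) = path_end (nfa_tgt \<delta>) q es" "Id (nfa_cat Q T \<delta>) q = (q, [])"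
    "Comp (nfa_cat Q T \<delta>) (q, es) (q', es') = (q, es @ es')"
  by (simp_all add: nfa_cat_def free_cat_def)

lemma ex1_pairI: "P (a, b) \<Longrightarrow> (\<And>x y. P (x, y) \<Longrightarrow> x = a \<and> y = b) \<Longrightarrow> Ex1 P"
  by (metis ex1I surj_pair)

lemma nfa_to_ulf:
  fixes Qc :: "('o, 'm) cat" and \<delta> :: "'t \<Rightarrow> 'q \<times> 'c \<times> 'q"
  assumes cC: "is_category Qc" and fF: "is_functor Qc (FB S) Po Pm"
    and fQ: "finite Q" and fT: "finite T" and \<delta>T: "\<forall>t\<in>T. \<delta> t \<in> Q \<times> S \<times> Q"
    and iso: "is_cat_iso Qc (nfa_cat Q T \<delta>) Fo Fm"
    and Pmc: "\<forall>f\<in>Arr Qc. Pm f = nfa_functor_arr \<delta> (Fm f)"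
  shows "is_ULF Qc (FB S) Po Pm \<and> is_finitary Qc (FB S) Po Pm"
proof -
  let ?D = "nfa_cat Q T \<delta>"
  obtain Go Gm where F: "is_functor Qc ?D Fo Fm" and G: "is_functor ?D Qc Go Gm"
    and i1: "\<forall>x\<in>Obj Qc. Go (Fo x) = x" and i3: "\<forall>f\<in>Arr Qc. Gm (Fm f) = f" and i4: "\<forall>g\<in>Arr ?D. Fm (Gm g) = g"
    using iso unfolding is_cat_iso_def by blast
  have Fa: "\<And>f. f \<in> Arr Qc \<Longrightarrow> Fm f \<in> Arr ?D \<and> Dom ?D (Fm f) = Fo (Dom Qc f) \<and> Cod ?D (Fm f) = Fo (Cod Qc f)"
    and Fo: "\<And>x. x \<in> Obj Qc \<Longrightarrow> Fo x \<in> Q"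
    and Fc: "\<And>f g. f \<in> Arr Qc \<Longrightarrow> g \<in> Arr Qc \<Longrightarrow> Cod Qc f = Dom Qc g \<Longrightarrow> Fm (Comp Qc f g) = Comp ?D (Fm f) (Fm g)"
    using F unfolding is_functor_def nfa_simps by auto
  have Ga: "\<And>f. f \<in> Arr ?D \<Longrightarrow> Gm f \<in> Arr Qc \<and> Dom Qc (Gm f) = Go (Dom ?D f) \<and> Cod Qc (Gm f) = Go (Cod ?D f)"
    and Gc: "\<And>f g. f \<in> Arr ?D \<Longrightarrow> g \<in> Arr ?D \<Longrightarrow> Cod ?D f = Dom ?D g \<Longrightarrow> Gm (Comp ?D f g) = Comp Qc (Gm f) (Gm g)"
    using G unfolding is_functor_def by auto
  have tgtQ: "\<forall>e\<in>T. nfa_tgt \<delta> e \<in> Q" using \<delta>T by (auto simp: nfa_tgt_def)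
  have nfa_fun: "nfa_functor_arr \<delta> (q, ts) = ((), map (nfa_lbl \<delta>) ts)" for q ts
    by (simp add: nfa_functor_arr_def)
  have fin: "is_finitary Qc (FB S) Po Pm"
    unfolding is_finitary_def
  proof (intro conjI ballI)
    fix A :: unit
    have "inj_on Fo (Obj Qc)" using i1 by (metis inj_onI)
    moreover have "Fo ` Obj Qc \<subseteq> Q" using Fo by auto
    ultimately have "finite (Obj Qc)" using fQ by (metis finite_subset finite_imageD)
    then show "finite {X \<in> Obj Qc. Po X = A}" by simp
  next
    fix w assume w: "w \<in> Arr (FB S)"
    have "{\<alpha> \<in> Arr Qc. Pm \<alpha> = w} \<subseteq> Gm ` (Q \<times> {ts. set ts \<subseteq> T \<and> length ts = length (snd w)})"
    proof
      fix a assume "a \<in> {\<alpha> \<in> Arr Qc. Pm \<alpha> = w}"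
      then have a: "a \<in> Arr Qc" "Pm a = w" by auto
      obtain q ts where qt: "Fm a = (q, ts)" by (cases "Fm a")
      have "(q, ts) \<in> Arr ?D" using Fa a qt by metis
      then have q: "q \<in> Q" "path_ok T (nfa_src \<delta>) (nfa_tgt \<delta>) q ts" unfolding nfa_arr by simp_all
      from Pmc a(1) have "Pm a = nfa_functor_arr \<delta> (Fm a)" by blast
      then have "w = ((), map (nfa_lbl \<delta>) ts)" using a(2) qt nfa_fun by simp
      then have "length ts = length (snd w)" by simp
      moreover have "a = Gm (q, ts)" using i3 a qt by metis
      moreover have "set ts \<subseteq> T" using path_ok_set[OF q(2)] .
      ultimately show "a \<in> Gm ` (Q \<times> {ts. set ts \<subseteq> T \<and> length ts = length (snd w)})"
        using q(1) by (intro image_eqI[of _ _ "(q, ts)"]) simp_all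
    qed
    moreover have "finite (Q \<times> {ts. set ts \<subseteq> T \<and> length ts = length (snd w)})"
      using fQ fT by (simp add: finite_lists_length_eq)
    ultimately show "finite {\<alpha> \<in> Arr Qc. Pm \<alpha> = w}" by (rule finite_surj[rotated])
  qed
  have ulf: "is_ULF Qc (FB S) Po Pm"
    unfolding is_ULF_def
  proof (intro ballI impI)
    fix a u v assume a: "a \<in> Arr Qc" and u: "u \<in> Arr (FB S)" and v: "v \<in> Arr (FB S)"
      and "Cod (FB S) u = Dom (FB S) v" and auv: "Pm a = Comp (FB S) u v"
    obtain u' v' where uv: "u = ((), u')" "v = ((), v')" by (cases u, cases v) auto
    obtain q ts where qt: "Fm a = (q, ts)" by (cases "Fm a")
    have "(q, ts) \<in> Arr ?D" using Fa a qt by metis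
    then have q: "q \<in> Q" "path_ok T (nfa_src \<delta>) (nfa_tgt \<delta>) q ts" unfolding nfa_arr by simp_all
    have mts: "map (nfa_lbl \<delta>) ts = u' @ v'" using Pmc a qt nfa_fun auv uv FB_simps(5)
      by (metis snd_conv)
    define ts1 where "ts1 = take (length u') ts"
    define ts2 where "ts2 = drop (length u') ts"
    define q2 where "q2 = path_end (nfa_tgt \<delta>) q ts1"
    have tss: "ts = ts1 @ ts2" by (simp add: ts1_def ts2_def)
    have m1: "map (nfa_lbl \<delta>) ts1 = u'" using mts unfolding ts1_def by (metis append_eq_conv_conj take_map)
    have m2: "map (nfa_lbl \<delta>) ts2 = v'" using mts unfolding ts2_def by (metis append_eq_conv_conj drop_map)
    have p1: "path_ok T (nfa_src \<delta>) (nfa_tgt \<delta>) q ts1" and p2: "path_ok T (nfa_src \<delta>) (nfa_tgt \<delta>) q2 ts2"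
      using q(2) tss unfolding q2_def by (metis path_ok_append)+
    have q2Q: "q2 \<in> Q" unfolding q2_def using path_end_in[OF p1 q(1) tgtQ] .
    have A1: "(q, ts1) \<in> Arr ?D" and A2: "(q2, ts2) \<in> Arr ?D" using q p1 p2 q2Q by (simp_all add: nfa_arr)
    have cod1: "Cod ?D (q, ts1) = Dom ?D (q2, ts2)" by (simp add: nfa_simps q2_def)
    have comp12: "Comp ?D (q, ts1) (q2, ts2) = Fm a" using qt tss by (simp add: nfa_simps)
    show "\<exists>!(b, c). b \<in> Arr Qc \<and> c \<in> Arr Qc \<and> Cod Qc b = Dom Qc c \<and> a = Comp Qc b c \<and> Pm b = u \<and> Pm c = v"
    proof (rule ex1_pairI)
      show "case (Gm (q, ts1), Gm (q2, ts2)) of (b, c) \<Rightarrow> b \<in> Arr Qc \<and> c \<in> Arr Qc \<and> Cod Qc b = Dom Qc c \<and> a = Comp Qc b c \<and> Pm b = u \<and> Pm c = v"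
      proof -
        have b: "Gm (q, ts1) \<in> Arr Qc" "Gm (q2, ts2) \<in> Arr Qc" using Ga A1 A2 by auto
        have c: "Cod Qc (Gm (q, ts1)) = Dom Qc (Gm (q2, ts2))" using Ga[OF A1] Ga[OF A2] cod1 by simp
        have d: "a = Comp Qc (Gm (q, ts1)) (Gm (q2, ts2))" using Gc[OF A1 A2 cod1] comp12 i3 a by metis
        have e: "Pm (Gm (q, ts1)) = u" using Pmc b(1) i4 A1 nfa_fun m1 uv by metis
        have f: "Pm (Gm (q2, ts2)) = v" using Pmc b(2) i4 A2 nfa_fun m2 uv by metis
        show ?thesis using b c d e f by simp
      qed
    next
      fix b c assume "case (b, c) of (b, c) \<Rightarrow> b \<in> Arr Qc \<and> c \<in> Arr Qc \<and> Cod Qc b = Dom Qc c \<and> a = Comp Qc b c \<and> Pm b = u \<and> Pm c = v"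
      then have bc: "b \<in> Arr Qc" "c \<in> Arr Qc" "Cod Qc b = Dom Qc c" "a = Comp Qc b c" "Pm b = u" "Pm c = v"
        by auto
      obtain q1 s1 where b1: "Fm b = (q1, s1)" by (cases "Fm b")
      obtain q3 s2 where c1: "Fm c = (q3, s2)" by (cases "Fm c")
      have "Fm a = Comp ?D (Fm b) (Fm c)" using Fc[OF bc(1-3)] bc(4) by simp
      then have e1: "q = q1" "ts = s1 @ s2" using qt b1 c1 by (simp_all add: nfa_simps)
      have "map (nfa_lbl \<delta>) s1 = u'" using Pmc bc(1,5) b1 nfa_fun uv by (metis prod.inject)
      then have "length s1 = length u'" by (metis length_map)
      then have s1: "s1 = ts1" and s2: "s2 = ts2" using e1 unfolding ts1_def ts2_def by simp_all
      have "q3 = Dom ?D (Fm c)" using c1 by (simp add: nfa_simps)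
      also have "\<dots> = Fo (Dom Qc c)" using Fa bc(2) by blast
      also have "\<dots> = Fo (Cod Qc b)" using bc(3) by simp
      also have "\<dots> = Cod ?D (Fm b)" using Fa bc(1) by metis
      also have "\<dots> = q2" using b1 e1 s1 by (simp add: nfa_simps q2_def)
      finally have q3: "q3 = q2" .
      have "b = Gm (q, ts1)" using i3 bc(1) b1 e1 s1 by metis
      moreover have "c = Gm (q2, ts2)" using i3 bc(2) c1 q3 s2 by metis
      ultimately show "b = Gm (q, ts1) \<and> c = Gm (q2, ts2)" by simp
    qed
  qed
  show ?thesis using fin ulf by simp
qed

theorem mainTheorem3:
  fixes \<Sigma> :: "'c set"
    and Qc :: "('o, 'm) cat"
    and Po :: "'o \<Rightarrow> unit" and Pm :: "'m \<Rightarrow> unit \<times> 'c list"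
  assumes "finite \<Sigma>"
    and "is_category Qc"
    and "is_functor Qc (FB \<Sigma>) Po Pm"
  shows "(is_ULF Qc (FB \<Sigma>) Po Pm \<and> is_finitary Qc (FB \<Sigma>) Po Pm) \<longleftrightarrow>
    (\<exists>(Q :: nat set) (T :: nat set) (\<delta> :: nat \<Rightarrow> nat \<times> 'c \<times> nat).
       finite Q \<and> finite T \<and> (\<forall>t\<in>T. \<delta> t \<in> Q \<times> \<Sigma> \<times> Q) \<and>
       (\<exists>Fo Fm. is_cat_iso Qc (nfa_cat Q T \<delta>) Fo Fm \<and>
          (\<forall>x\<in>Obj Qc. Po x = ()) \<and>
          (\<forall>f\<in>Arr Qc. Pm f = nfa_functor_arr \<delta> (Fm f))))"
proof
  assume "is_ULF Qc (FB \<Sigma>) Po Pm \<and> is_finitary Qc (FB \<Sigma>) Po Pm"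
  then interpret ulfc \<Sigma> Qc Po Pm using assms by unfold_locales auto
  show "\<exists>(Q :: nat set) (T :: nat set) (\<delta> :: nat \<Rightarrow> nat \<times> 'c \<times> nat).
       finite Q \<and> finite T \<and> (\<forall>t\<in>T. \<delta> t \<in> Q \<times> \<Sigma> \<times> Q) \<and>
       (\<exists>Fo Fm. is_cat_iso Qc (nfa_cat Q T \<delta>) Fo Fm \<and>
          (\<forall>x\<in>Obj Qc. Po x = ()) \<and>
          (\<forall>f\<in>Arr Qc. Pm f = nfa_functor_arr \<delta> (Fm f)))" by (rule exists_nfa)
next
  assume "\<exists>(Q :: nat set) (T :: nat set) (\<delta> :: nat \<Rightarrow> nat \<times> 'c \<times> nat).
       finite Q \<and> finite T \<and> (\<forall>t\<in>T. \<delta> t \<in> Q \<times> \<Sigma> \<times> Q) \<and>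
       (\<exists>Fo Fm. is_cat_iso Qc (nfa_cat Q T \<delta>) Fo Fm \<and>
          (\<forall>x\<in>Obj Qc. Po x = ()) \<and>
          (\<forall>f\<in>Arr Qc. Pm f = nfa_functor_arr \<delta> (Fm f)))"
  then obtain Q T and \<delta> :: "nat \<Rightarrow> nat \<times> 'c \<times> nat" and Fo Fm where
    h: "finite Q" "finite T" "\<forall>t\<in>T. \<delta> t \<in> Q \<times> \<Sigma> \<times> Q" "is_cat_iso Qc (nfa_cat Q T \<delta>) Fo Fm"
      "\<forall>f\<in>Arr Qc. Pm f = nfa_functor_arr \<delta> (Fm f)" by blast
  show "is_ULF Qc (FB \<Sigma>) Po Pm \<and> is_finitary Qc (FB \<Sigma>) Po Pm"
    by (rule nfa_to_ulf[OF assms(2,3) h])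
qed

end
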